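(* Let $\mathcal{S}$ be a set with $|\mathcal{S}|=m\ge 2$, let $l\ge 4$, and fix $j$ distinct reduced words of length $g(l)<l/4$ in the free group $\langle\mathcal{S}\rangle$. Then the probability that a uniformly random cyclically reduced word of length $l$ in $\langle\mathcal{S}\rangle$ contains none of these $j$ words as a subword is at most \[ \exp\left(\frac{2}{(2m-1)^{(l/2)-1}}-\frac{lj}{9g(l)(2m-1)^{g(l)}}\right). \] *)

theory Defs
  imports Complex_Main "HOL-Library.Sublist"
begin

text \<open>Words in the free group on a set S: lists of letters (s, b), where (s, True)
 stands for the generator s and (s, False) for its inverse.\<close>

type_synonym 'a letter = "'a \<times> bool"

definition inv_letter :: "'a letter \<Rightarrow> 'a letter" where
  "inv_letter x = (fst x, \<not> snd x)"

definition word_over :: "'a set \<Rightarrow> 'a letter list \<Rightarrow> bool" where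
  "word_over S w \<longleftrightarrow> (\<forall>x\<in>set w. fst x \<in> S)"

definition reduced :: "'a letter list \<Rightarrow> bool" where
  "reduced w \<longleftrightarrow> (\<forall>i. Suc i < length w \<longrightarrow> w ! Suc i \<noteq> inv_letter (w ! i))"

definition cyc_reduced :: "'a letter list \<Rightarrow> bool" where
  "cyc_reduced w \<longleftrightarrow> reduced w \<and> (w \<noteq> [] \<longrightarrow> last w \<noteq> inv_letter (hd w))"

definition reduced_words :: "'a set \<Rightarrow> nat \<Rightarrow> 'a letter list set" where
  "reduced_words S n = {w. word_over S w \<and> length w = n \<and> reduced w}"

definition cyc_reduced_words :: "'a set \<Rightarrow> nat \<Rightarrow> 'a letter list set" where
  "cyc_reduced_words S n = {w. word_over S w \<and> length w = n \<and> cyc_reduced w}"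

end

theory Submission imports Defs begin

lemma inv_inv[simp]: "inv_letter (inv_letter x) = x"
  by (simp add: inv_letter_def)

lemma inv_neq[simp]: "inv_letter x \<noteq> x"
  by (cases x) (simp add: inv_letter_def)

lemma inv_neq2[simp]: "x \<noteq> inv_letter x"
  by (cases x) (simp add: inv_letter_def)

lemma inv_sym: "(a \<noteq> inv_letter b) \<longleftrightarrow> (b \<noteq> inv_letter a)"
  by (metis inv_inv)

lemma inv_mem[simp]: "inv_letter x \<in> S \<times> UNIV \<longleftrightarrow> x \<in> S \<times> UNIV"
  by (cases x) (simp add: inv_letter_def)

lemma reduced_Nil[simp]: "reduced []" by (simp add: reduced_def)

lemma reduced_Cons: "reduced (x # xs) \<longleftrightarrow> reduced xs \<and> (xs \<noteq> [] \<longrightarrow> hd xs \<noteq> inv_letter x)"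
proof
  assume r: "reduced (x # xs)"
  have "reduced xs" unfolding reduced_def
  proof (intro allI impI)
    fix i assume "Suc i < length xs"
    then show "xs ! Suc i \<noteq> inv_letter (xs ! i)"
      using r[unfolded reduced_def, rule_format, of "Suc i"] by simp
  qed
  moreover have "xs \<noteq> [] \<longrightarrow> hd xs \<noteq> inv_letter x"
    using r[unfolded reduced_def, rule_format, of 0] by (cases xs) auto
  ultimately show "reduced xs \<and> (xs \<noteq> [] \<longrightarrow> hd xs \<noteq> inv_letter x)" by blast
next
  assume r: "reduced xs \<and> (xs \<noteq> [] \<longrightarrow> hd xs \<noteq> inv_letter x)"
  show "reduced (x # xs)" unfolding reduced_def
  proof (intro allI impI)
    fix i assume i: "Suc i < length (x # xs)"
    show "(x # xs) ! Suc i \<noteq> inv_letter ((x # xs) ! i)"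
    proof (cases i)
      case 0 then show ?thesis using r i by (cases xs) auto
    next
      case (Suc k) then show ?thesis using r i unfolding reduced_def by auto
    qed
  qed
qed

lemma reduced_append: "reduced (xs @ ys) \<longleftrightarrow> reduced xs \<and> reduced ys \<and>
   (xs \<noteq> [] \<and> ys \<noteq> [] \<longrightarrow> hd ys \<noteq> inv_letter (last xs))"
  by (induction xs) (auto simp: reduced_Cons)

lemma reduced_last_Cons: "xs \<noteq> [] \<Longrightarrow> reduced (xs @ ys) \<Longrightarrow> reduced (last xs # ys)"
  by (auto simp: reduced_append reduced_Cons)

lemma word_over_iff: "word_over S w \<longleftrightarrow> set w \<subseteq> S \<times> UNIV"
  by (auto simp: word_over_def)

lemma last_mem: "p \<in> A \<Longrightarrow> set a \<subseteq> A \<Longrightarrow> last (p # a) \<in> A"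
  by (cases a) auto

lemma card_L: "card (S \<times> (UNIV :: bool set)) = 2 * card S"
  by (simp add: card_cartesian_product)

definition E :: "'a set \<Rightarrow> nat \<Rightarrow> 'a letter \<Rightarrow> 'a letter \<Rightarrow> 'a letter list set" where
  "E S n p s = {v. length v = n \<and> set v \<subseteq> S \<times> UNIV \<and> reduced (p # v) \<and> last (p # v) = s}"

definition rw :: "'a set \<Rightarrow> nat \<Rightarrow> 'a letter \<Rightarrow> 'a letter list set" where
  "rw S n p = {v. length v = n \<and> set v \<subseteq> S \<times> UNIV \<and> reduced (p # v)}"

definition par :: "nat \<Rightarrow> 'a letter \<Rightarrow> 'a letter" where
  "par n p = (if even n then p else inv_letter p)"

lemma finite_E: "finite S \<Longrightarrow> finite (E S n p s)"
  unfolding E_def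
  by (rule finite_subset[OF _ finite_lists_length_eq[of "S \<times> (UNIV::bool set)" n]]) auto

lemma finite_rw: "finite S \<Longrightarrow> finite (rw S n p)"
  unfolding rw_def
  by (rule finite_subset[OF _ finite_lists_length_eq[of "S \<times> (UNIV::bool set)" n]]) auto


lemma inv_eq_iff: "(inv_letter a = b) = (a = inv_letter b)"
  by (metis inv_inv)

lemma E_Suc: "E S (Suc n) p s = (\<lambda>(y,v). v @ [s]) ` (SIGMA y:(S \<times> UNIV) - {inv_letter s}. E S n p y)"
  if "p \<in> S \<times> UNIV" "s \<in> S \<times> UNIV"
proof
  show "E S (Suc n) p s \<subseteq> (\<lambda>(y,v). v @ [s]) ` (SIGMA y:(S \<times> UNIV) - {inv_letter s}. E S n p y)"
  proof
    fix u assume u: "u \<in> E S (Suc n) p s"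
    have len: "length u = Suc n" and su: "set u \<subseteq> S \<times> UNIV" and ru: "reduced (p # u)" and lu: "last (p # u) = s"
      using u by (auto simp: E_def)
    have ne: "u \<noteq> []" using len by auto
    define v where "v = butlast u"
    have uu: "u = v @ [s]" using ne lu unfolding v_def by (metis append_butlast_last_id last_ConsR)
    have r: "reduced ((p # v) @ [s])" using ru uu by simp
    have sv: "set v \<subseteq> S \<times> UNIV" using su uu by simp
    have y1: "last (p # v) \<in> S \<times> UNIV" using that(1) sv by (rule last_mem)
    have "s \<noteq> inv_letter (last (p # v))" using r unfolding reduced_append by simp
    then have y2: "last (p # v) \<noteq> inv_letter s" by (metis inv_inv)
    have y3: "v \<in> E S n p (last (p # v))" using len sv r uu unfolding E_def reduced_append by simp
    show "u \<in> (\<lambda>(y,v). v @ [s]) ` (SIGMA y:(S \<times> UNIV) - {inv_letter s}. E S n p y)"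
      using y1 y2 y3 uu by (intro image_eqI[where x="(last (p#v), v)"]) auto
  qed
next
  show "(\<lambda>(y,v). v @ [s]) ` (SIGMA y:(S \<times> UNIV) - {inv_letter s}. E S n p y) \<subseteq> E S (Suc n) p s"
  proof
    fix u assume "u \<in> (\<lambda>(y,v). v @ [s]) ` (SIGMA y:(S \<times> UNIV) - {inv_letter s}. E S n p y)"
    then obtain y v where y: "y \<noteq> inv_letter s" and v: "v \<in> E S n p y" and uv: "u = v @ [s]" by auto
    have "s \<noteq> inv_letter y" using y by (metis inv_inv)
    then have "reduced ((p # v) @ [s])" using v unfolding E_def reduced_append by (simp add: reduced_Cons)
    then show "u \<in> E S (Suc n) p s" using v that uv unfolding E_def by simp
  qed
qed
lemma E_Suc_inj: "inj_on (\<lambda>(y,v). v @ [s]) (SIGMA y:A. E S n p y)"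
  by (auto simp: inj_on_def E_def)

lemma E_0: "E S 0 p s = (if s = p then {[]} else {})"
  by (auto simp: E_def reduced_Cons)

lemma rowsum_gen:
  fixes c :: "'b \<Rightarrow> int"
  assumes "finite L" "P \<in> L" "\<And>y. y \<in> L \<Longrightarrow> N * c y = A + D * (if y = P then 1 else 0)"
  shows "N * (\<Sum>y\<in>L. c y) = int (card L) * A + D"
proof -
  have "N * (\<Sum>y\<in>L. c y) = (\<Sum>y\<in>L. A + D * (if y = P then 1 else 0))"
    by (simp add: sum_distrib_left assms(3))
  also have "\<dots> = int (card L) * A + D"
    using assms(1,2) by (simp add: sum.distrib if_distrib[of "\<lambda>x. D * x"] cong: if_cong)
  finally show ?thesis .
qed

lemma card_E_Suc:
  assumes "finite S" "p \<in> S \<times> UNIV" "s \<in> S \<times> UNIV"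
  shows "int (card (E S (Suc n) p s)) = (\<Sum>y\<in>S \<times> UNIV. int (card (E S n p y))) - int (card (E S n p (inv_letter s)))"
proof -
  have fin: "finite (S \<times> (UNIV :: bool set))" using assms by simp
  have "card (E S (Suc n) p s) = card (SIGMA y:(S \<times> UNIV) - {inv_letter s}. E S n p y)"
    unfolding E_Suc[OF assms(2,3)] by (rule card_image[OF E_Suc_inj])
  also have "\<dots> = (\<Sum>y\<in>(S \<times> UNIV) - {inv_letter s}. card (E S n p y))"
    using fin assms(1) by (intro card_SigmaI) (auto simp: finite_E)
  finally have "int (card (E S (Suc n) p s)) = (\<Sum>y\<in>(S \<times> UNIV) - {inv_letter s}. int (card (E S n p y)))"
    by simp
  also have "\<dots> = (\<Sum>y\<in>S \<times> UNIV. int (card (E S n p y))) - int (card (E S n p (inv_letter s)))"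
    using fin assms(3) by (subst sum_diff1) auto
  finally show ?thesis .
qed

lemma par_mem: "p \<in> S \<times> UNIV \<Longrightarrow> par n p \<in> S \<times> UNIV"
  by (simp add: par_def)

lemma par_Suc: "par (Suc n) p = inv_letter (par n p)"
  by (simp add: par_def)

lemma E_formula:
  assumes "finite S" "card S = m" "p \<in> S \<times> UNIV" "s \<in> S \<times> UNIV"
  shows "int (2*m) * int (card (E S n p s)) = (int (2*m) - 1)^n - (-1)^n + int (2*m) * (-1)^n * (if s = par n p then 1 else 0)"
  using assms(4)
proof (induction n arbitrary: s)
  case 0
  then show ?case by (auto simp: E_0 par_def)
next
  case (Suc n)
  define N where "N = int (2*m)"
  have cL: "int (card (S \<times> (UNIV :: bool set))) = N" using assms by (simp add: card_L N_def)
  have fin: "finite (S \<times> (UNIV :: bool set))" using assms by simp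
  have ih: "N * int (card (E S n p y)) = ((N - 1)^n - (-1)^n) + (N * (-1)^n) * (if y = par n p then 1 else 0)"
    if "y \<in> S \<times> UNIV" for y
    using Suc.IH[OF that] unfolding N_def by (simp add: mult.assoc)
  have rs0: "N * (\<Sum>y\<in>S \<times> UNIV. int (card (E S n p y))) = int (card (S \<times> (UNIV :: bool set))) * ((N - 1)^n - (-1)^n) + N * (-1)^n"
    by (rule rowsum_gen[OF fin par_mem[OF assms(3)] ih])
  have rs: "N * (\<Sum>y\<in>S \<times> UNIV. int (card (E S n p y))) = N * ((N - 1)^n - (-1)^n) + N * (-1)^n"
    using rs0 cL by simp
  have i: "N * int (card (E S n p (inv_letter s))) = (N - 1)^n - (-1)^n + N * (-1)^n * (if inv_letter s = par n p then 1 else 0)"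
    using Suc.IH[of "inv_letter s"] Suc.prems unfolding N_def by simp
  have "N * int (card (E S (Suc n) p s)) = N * (\<Sum>y\<in>S \<times> UNIV. int (card (E S n p y))) - N * int (card (E S n p (inv_letter s)))"
    using card_E_Suc[OF assms(1,3) Suc.prems] by (simp add: right_diff_distrib)
  also have "\<dots> = (N - 1)^(Suc n) - (-1)^(Suc n) + N * (-1)^(Suc n) * (if s = par (Suc n) p then 1 else 0)"
    unfolding rs i par_Suc by (auto simp: algebra_simps inv_eq_iff)
  finally show ?case unfolding N_def .
qed


lemma E_upper:
  assumes "finite S" "card S = m" "m \<ge> 1" "p \<in> S \<times> UNIV" "s \<in> S \<times> UNIV"
  shows "int (2*m) * int (card (E S n p s)) \<le> (int (2*m) - 1)^n + (int (2*m) - 1)"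
proof -
  have f: "int (2*m) * int (card (E S n p s)) = (int (2*m) - 1)^n - (-1)^n + int (2*m) * (-1)^n * (if s = par n p then 1 else 0)"
    by (rule E_formula[OF assms(1,2,4,5)])
  show ?thesis
  proof (cases "even n")
    case True then show ?thesis using f by auto
  next
    case False then show ?thesis using f assms(3) by auto
  qed
qed

lemma E_diag_lower:
  assumes "finite S" "card S = m" "m \<ge> 1" "s \<in> S \<times> UNIV"
  shows "int (2*m) * int (card (E S n s s)) \<ge> (int (2*m) - 1)^n"
proof -
  have f: "int (2*m) * int (card (E S n s s)) = (int (2*m) - 1)^n - (-1)^n + int (2*m) * (-1)^n * (if s = par n s then 1 else 0)"
    by (rule E_formula[OF assms(1,2,4,4)])
  show ?thesis
  proof (cases "even n")
    case True then show ?thesis using f assms(3) by (auto simp: par_def)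
  next
    case False then show ?thesis using f by (auto simp: par_def)
  qed
qed

lemma rw_UN: "p \<in> S \<times> UNIV \<Longrightarrow> rw S n p = (\<Union>s\<in>S \<times> UNIV. E S n p s)"
  unfolding rw_def E_def using last_mem[of p "S \<times> UNIV"] by blast

lemma card_rw:
  assumes "finite S" "card S = m" "m \<ge> 1" "p \<in> S \<times> UNIV"
  shows "card (rw S n p) = (2*m - 1)^n"
proof -
  define N where "N = int (2*m)"
  have fin: "finite (S \<times> (UNIV :: bool set))" using assms by simp
  have "card (rw S n p) = (\<Sum>s\<in>S \<times> UNIV. card (E S n p s))"
    unfolding rw_UN[OF assms(4)] using fin assms(1)
    by (intro card_UN_disjoint) (auto simp: finite_E, auto simp: E_def)
  then have c: "int (card (rw S n p)) = (\<Sum>s\<in>S \<times> UNIV. int (card (E S n p s)))" by simp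
  have ih: "N * int (card (E S n p y)) = ((N - 1)^n - (-1)^n) + (N * (-1)^n) * (if y = par n p then 1 else 0)"
    if "y \<in> S \<times> UNIV" for y
    using E_formula[OF assms(1,2,4) that] unfolding N_def by (simp add: mult.assoc)
  have "N * int (card (rw S n p)) = int (card (S \<times> (UNIV :: bool set))) * ((N - 1)^n - (-1)^n) + N * (-1)^n"
    unfolding c by (rule rowsum_gen[OF fin par_mem[OF assms(4)] ih])
  also have "\<dots> = N * (N - 1)^n" using assms by (simp add: card_L N_def algebra_simps)
  finally have "int (card (rw S n p)) = (N - 1)^n" using assms(3) unfolding N_def by simp
  moreover have "int ((2*m-1)^n) = (N - 1)^n" using assms(3) unfolding N_def by (simp add: of_nat_diff)
  ultimately show ?thesis by (metis of_nat_eq_iff)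
qed


definition G :: "'a set \<Rightarrow> 'a letter list set \<Rightarrow> nat \<Rightarrow> nat \<Rightarrow> 'a letter \<Rightarrow> 'a letter list set" where
  "G S W g k p = {v. length v = k*(g+1) \<and> set v \<subseteq> S \<times> UNIV \<and> reduced (p # v) \<and>
      (\<forall>i<k. take g (drop (i*(g+1)+1) v) \<notin> W)}"

lemma finite_G: "finite S \<Longrightarrow> finite (G S W g k p)"
  unfolding G_def
  by (rule finite_subset[OF _ finite_lists_length_eq[of "S \<times> (UNIV::bool set)" "k*(g+1)"]]) auto

lemma card_two_excl:
  assumes "finite L"
  shows "card {x\<in>L. x \<noteq> a \<and> x \<noteq> b} \<ge> card L - 2"
proof -
  have "card L - card {a,b} \<le> card (L - {a,b})" by (rule diff_card_le_card_Diff) simp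
  moreover have "card {a,b} \<le> 2" by (simp add: card_insert_if)
  ultimately have "card L - 2 \<le> card (L - {a,b})" by linarith
  moreover have "L - {a,b} = {x\<in>L. x \<noteq> a \<and> x \<noteq> b}" by auto
  ultimately show ?thesis by simp
qed

lemma G1_bound:
  assumes "finite S" "card S = m" "m \<ge> 1" "g \<ge> 1" "W \<subseteq> reduced_words S g" "finite W"
    "p \<in> S \<times> UNIV"
  shows "real (card (G S W g 1 p)) \<le> real ((2*m - 1)^(g+1)) - real (card W) * (2 * real m - 2)"
proof -
  define L where "L = S \<times> (UNIV :: bool set)"
  have finL: "finite L" using assms(1) by (simp add: L_def)
  define Bad where "Bad = (\<lambda>(u,x). x # u) ` (SIGMA u:W. {x \<in> L. x \<noteq> inv_letter p \<and> x \<noteq> inv_letter (hd u)})"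
  have Bsub: "Bad \<subseteq> rw S (g+1) p"
  proof
    fix v assume "v \<in> Bad"
    then obtain u x where u: "u \<in> W" and x: "x \<in> L" "x \<noteq> inv_letter p" "x \<noteq> inv_letter (hd u)" and v: "v = x # u"
      unfolding Bad_def by auto
    have ur: "word_over S u" "length u = g" "reduced u" using u assms(5) by (auto simp: reduced_words_def)
    have "u \<noteq> []" using ur assms(4) by auto
    moreover have "hd u \<noteq> inv_letter x" using x(3) by (metis inv_inv)
    ultimately show "v \<in> rw S (g+1) p" using ur x v unfolding rw_def L_def
      by (auto simp: word_over_iff reduced_Cons)
  qed
  have Gsub: "G S W g 1 p \<subseteq> rw S (g+1) p - Bad"
  proof
    fix v assume v: "v \<in> G S W g 1 p"
    then have vW: "take g (drop 1 v) \<notin> W" and "v \<in> rw S (g+1) p" unfolding G_def rw_def by auto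
    moreover have "v \<notin> Bad"
    proof
      assume "v \<in> Bad"
      then obtain u x where u: "u \<in> W" and v: "v = x # u" unfolding Bad_def by auto
      have "length u = g" using u assms(5) by (auto simp: reduced_words_def)
      then show False using vW u v by simp
    qed
    ultimately show "v \<in> rw S (g+1) p - Bad" by blast
  qed
  have finB: "finite Bad" using finite_rw[OF assms(1)] Bsub by (rule finite_subset[rotated])
  have injB: "inj_on (\<lambda>(u,x). x # u) (SIGMA u:W. {x \<in> L. x \<noteq> inv_letter p \<and> x \<noteq> inv_letter (hd u)})"
    by (auto simp: inj_on_def)
  have "card Bad = (\<Sum>u\<in>W. card {x \<in> L. x \<noteq> inv_letter p \<and> x \<noteq> inv_letter (hd u)})"
    unfolding Bad_def card_image[OF injB] using assms(6) finL by (intro card_SigmaI) auto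
  also have "\<dots> \<ge> (\<Sum>u\<in>W. 2*m - 2)"
    using card_two_excl[OF finL] assms(2) by (intro sum_mono) (auto simp: L_def card_L)
  finally have cB: "card Bad \<ge> card W * (2*m - 2)" by simp
  have "card (G S W g 1 p) \<le> card (rw S (g+1) p - Bad)"
    using Gsub finite_rw[OF assms(1)] by (intro card_mono) auto
  also have "\<dots> = card (rw S (g+1) p) - card Bad" using Bsub finB by (rule card_Diff_subset[rotated])
  finally have c: "card (G S W g 1 p) + card Bad \<le> card (rw S (g+1) p)"
    using card_mono[OF finite_rw[OF assms(1)] Bsub] by linarith
  have "real (card (G S W g 1 p)) \<le> real (card (rw S (g+1) p)) - real (card Bad)"
    using c by linarith
  moreover have "real (card Bad) \<ge> real (card W) * (2 * real m - 2)"
  proof -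
    have "real (card W * (2*m - 2)) \<le> real (card Bad)" using cB by linarith
    moreover have "real (card W * (2*m - 2)) = real (card W) * (2 * real m - 2)" using assms(3)
      by (simp add: of_nat_diff)
    ultimately show ?thesis by (metis mult_eq_0_iff of_nat_0 order_refl)
  qed
  ultimately show ?thesis using card_rw[OF assms(1,2,3,7)] by simp
qed

lemma G_Suc:
  "G S W g (Suc k) p \<subseteq> (\<lambda>(a,b). a @ b) ` (SIGMA a:G S W g 1 p. G S W g k (last (p # a)))"
proof
  fix v assume v: "v \<in> G S W g (Suc k) p"
  have len: "length v = (g+1) + k*(g+1)" and sv: "set v \<subseteq> S \<times> UNIV" and rv: "reduced (p # v)"
    and bl: "\<And>i. i < Suc k \<Longrightarrow> take g (drop (i*(g+1)+1) v) \<notin> W"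
    using v unfolding G_def by auto
  define a where "a = take (g+1) v"
  define b where "b = drop (g+1) v"
  have vab: "v = a @ b" unfolding a_def b_def by simp
  have rab: "reduced ((p # a) @ b)" using rv vab by simp
  have a1: "a \<in> G S W g 1 p"
  proof -
    have "reduced (p # a)" using iffD1[OF reduced_append rab] by blast
    moreover have "take g (drop 1 a) \<notin> W" using bl[of 0] unfolding a_def by (simp add: drop_take)
    ultimately show ?thesis using len sv unfolding G_def a_def by (auto dest: in_set_takeD)
  qed
  have b1: "b \<in> G S W g k (last (p # a))"
  proof -
    have "reduced (last (p # a) # b)" using reduced_last_Cons[OF _ rab] by simp
    moreover have "take g (drop (i*(g+1)+1) b) \<notin> W" if "i < k" for i
    proof -
      have "drop (i*(g+1)+1) b = drop (Suc i*(g+1)+1) v" unfolding b_def by (simp add: algebra_simps)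
      then show ?thesis using bl[of "Suc i"] that by simp
    qed
    ultimately show ?thesis using len sv unfolding G_def b_def by (auto dest: in_set_dropD)
  qed
  show "v \<in> (\<lambda>(a,b). a @ b) ` (SIGMA a:G S W g 1 p. G S W g k (last (p # a)))"
    using a1 b1 vab by (intro image_eqI[where x="(a,b)"]) auto
qed

lemma G_0: "G S W g 0 p = {[]}"
  by (auto simp: G_def reduced_Cons)

lemma G_bound:
  assumes "finite S" "\<And>p. p \<in> S \<times> UNIV \<Longrightarrow> real (card (G S W g 1 p)) \<le> R" "p \<in> S \<times> UNIV"
  shows "real (card (G S W g k p)) \<le> R ^ k"
  using assms(3)
proof (induction k arbitrary: p)
  case 0 then show ?case by (simp add: G_0)
next
  case (Suc k)
  have R0: "R \<ge> 0" using assms(2)[OF Suc.prems] by (meson of_nat_0_le_iff order_trans)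
  have "card (G S W g (Suc k) p) \<le> card ((\<lambda>(a,b). a @ b) ` (SIGMA a:G S W g 1 p. G S W g k (last (p # a))))"
    using G_Suc by (rule card_mono[rotated]) (auto intro!: finite_SigmaI finite_G assms(1))
  also have "\<dots> \<le> card (SIGMA a:G S W g 1 p. G S W g k (last (p # a)))" by (rule card_image_le)
    (auto intro!: finite_SigmaI finite_G assms(1))
  also have "\<dots> = (\<Sum>a\<in>G S W g 1 p. card (G S W g k (last (p # a))))"
    by (intro card_SigmaI) (auto intro!: finite_G assms(1))
  finally have "real (card (G S W g (Suc k) p)) \<le> (\<Sum>a\<in>G S W g 1 p. real (card (G S W g k (last (p # a)))))"
    by (metis of_nat_le_iff of_nat_sum)
  also have "\<dots> \<le> (\<Sum>a\<in>G S W g 1 p. R ^ k)"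
  proof (rule sum_mono)
    fix a assume "a \<in> G S W g 1 p"
    then have "last (p # a) \<in> S \<times> UNIV" using Suc.prems by (intro last_mem) (auto simp: G_def)
    then show "real (card (G S W g k (last (p # a)))) \<le> R ^ k" by (rule Suc.IH)
  qed
  also have "\<dots> = real (card (G S W g 1 p)) * R ^ k" by simp
  also have "\<dots> \<le> R * R ^ k" using assms(2)[OF Suc.prems] R0 by (intro mult_right_mono) auto
  finally show ?case by simp
qed


lemma card_C_lower:
  assumes "finite S" "card S = m" "m \<ge> 1" "l \<ge> 1"
  shows "real (card (cyc_reduced_words S l)) \<ge> (2 * real m - 1) ^ l"
proof -
  define L where "L = S \<times> (UNIV :: bool set)"
  have finL: "finite L" using assms(1) by (simp add: L_def)
  define f where "f = (\<lambda>(s::'a letter, v::'a letter list). s # butlast v)"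
  have sub: "f ` (SIGMA s:L. E S l s s) \<subseteq> cyc_reduced_words S l"
  proof clarify
    fix s v assume s: "s \<in> L" and v: "v \<in> E S l s s"
    have len: "length v = l" and sv: "set v \<subseteq> L" and rv: "reduced (s # v)" and lv: "last (s # v) = s"
      using v unfolding E_def L_def by auto
    have ne: "v \<noteq> []" using len assms(4) by auto
    have vv: "v = butlast v @ [s]" using ne lv by (metis append_butlast_last_id last_ConsR)
    define w where "w = s # butlast v"
    have rw': "reduced (w @ [s])" using rv vv unfolding w_def by (metis append_Cons)
    have "reduced w" using iffD1[OF reduced_append rw'] by blast
    moreover have "s \<noteq> inv_letter (last w)" using iffD1[OF reduced_append rw'] unfolding w_def by simp
    then have "last w \<noteq> inv_letter (hd w)" unfolding w_def by (metis inv_inv list.sel(1))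
    moreover have "length w = l" unfolding w_def using len ne assms(4) by simp
    moreover have "set w \<subseteq> L" unfolding w_def using s sv by (auto dest: in_set_butlastD)
    ultimately show "f (s, v) \<in> cyc_reduced_words S l" unfolding f_def w_def
      by (simp add: cyc_reduced_words_def cyc_reduced_def word_over_iff L_def)
  qed
  have inj: "inj_on f (SIGMA s:L. E S l s s)"
  proof (rule inj_onI, clarify)
    fix s v s' v' assume "s \<in> L" "v \<in> E S l s s" "s' \<in> L" "v' \<in> E S l s' s'" and eq: "f (s, v) = f (s', v')"
    then have "length v = l" "length v' = l" "last (s # v) = s" "last (s' # v') = s'" unfolding E_def by auto
    moreover have "s = s'" "butlast v = butlast v'" using eq unfolding f_def by auto
    ultimately show "s = s' \<and> v = v'" using assms(4)
      by (metis append_butlast_last_id last_ConsR list.size(3) not_one_le_zero)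
  qed
  have finC: "finite (cyc_reduced_words S l)"
    unfolding cyc_reduced_words_def word_over_iff
    by (rule finite_subset[OF _ finite_lists_length_eq[of "S \<times> (UNIV::bool set)" l]]) (use assms(1) in auto)
  have "card (SIGMA s:L. E S l s s) \<le> card (cyc_reduced_words S l)"
    by (rule card_inj_on_le[OF inj sub finC])
  moreover have "card (SIGMA s:L. E S l s s) = (\<Sum>s\<in>L. card (E S l s s))"
    using finL assms(1) by (intro card_SigmaI) (auto simp: finite_E)
  ultimately have c1: "real (card (cyc_reduced_words S l)) \<ge> (\<Sum>s\<in>L. real (card (E S l s s)))"
    by (metis of_nat_le_iff of_nat_sum)
  have "(\<Sum>s\<in>L. real (card (E S l s s))) \<ge> (\<Sum>s\<in>L. (2 * real m - 1) ^ l / (2 * real m))"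
  proof (rule sum_mono)
    fix s assume "s \<in> L"
    then have "int (2*m) * int (card (E S l s s)) \<ge> (int (2*m) - 1)^l"
      using E_diag_lower[OF assms(1,2,3)] unfolding L_def by blast
    then have "real_of_int (int (2*m) * int (card (E S l s s))) \<ge> real_of_int ((int (2*m) - 1)^l)"
      by (rule of_int_le_iff[THEN iffD2])
    then have "2 * real m * real (card (E S l s s)) \<ge> (2 * real m - 1) ^ l" by simp
    then show "(2 * real m - 1) ^ l / (2 * real m) \<le> real (card (E S l s s))"
      using assms(3) by (simp add: divide_le_eq mult.commute)
  qed
  also have "(\<Sum>s\<in>L. (2 * real m - 1) ^ l / (2 * real m)) = (2 * real m - 1) ^ l"
    using assms(2,3) by (simp add: L_def card_L)
  finally show ?thesis using c1 by linarith
qed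

lemma sublist_block: "sublist (take a (drop b v)) (s # v @ t)"
proof -
  have 1: "sublist (take a (drop b v)) (drop b v)" by (rule sublist_take)
  have 2: "sublist (drop b v) v" by (rule sublist_drop)
  have 3: "sublist v (s # v @ t)" using sublist_appendI[of v "[s]" t] by simp
  show ?thesis using sublist_order.order.trans[OF sublist_order.order.trans[OF 1 2] 3] .
qed

lemma finite_butE: "finite S \<Longrightarrow> finite (butlast ` E S n p s)"
  by (simp add: finite_E)

lemma card_A_upper:
  assumes "finite S" "card S = m" "m \<ge> 1" "l = n + k*(g+1)" "n \<ge> 1"
    "\<And>p. p \<in> S \<times> UNIV \<Longrightarrow> real (card (G S W g 1 p)) \<le> R"
  shows "real (card {w \<in> cyc_reduced_words S l. \<forall>u\<in>W. \<not> sublist u w})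
     \<le> R ^ k * ((2 * real m - 1) ^ n + (2 * real m - 1))"
proof -
  define L where "L = S \<times> (UNIV :: bool set)"
  have finL: "finite L" using assms(1) by (simp add: L_def)
  define K where "K = k*(g+1)"
  define f where "f = (\<lambda>(s::'a letter, v::'a letter list, t::'a letter list). s # v @ t)"
  define T where "T = (SIGMA s:L. SIGMA v:G S W g k s. butlast ` E S n (last (s # v)) s)"
  define A where "A = {w \<in> cyc_reduced_words S l. \<forall>u\<in>W. \<not> sublist u w}"
  have sub: "A \<subseteq> f ` T"
  proof
    fix w assume wA: "w \<in> A"
    then have len: "length w = l" and sw: "set w \<subseteq> L" and rw': "reduced w"
      and cy0: "w \<noteq> [] \<longrightarrow> last w \<noteq> inv_letter (hd w)" and av: "\<And>u. u \<in> W \<Longrightarrow> \<not> sublist u w"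
      unfolding A_def cyc_reduced_words_def cyc_reduced_def word_over_iff L_def by auto
    have ne: "w \<noteq> []" using len assms(4,5) by auto
    have cy: "last w \<noteq> inv_letter (hd w)" using cy0 ne by blast
    define s where "s = hd w"
    define r where "r = tl w"
    define v where "v = take K r"
    define t where "t = drop K r"
    have wsr: "w = s # v @ t" unfolding s_def v_def t_def r_def using ne by simp
    have lr: "length r = l - 1" unfolding r_def using len by simp
    have lv: "length v = K" unfolding v_def using lr assms(4,5) K_def by simp
    have lt: "length t = n - 1" unfolding t_def using lr assms(4,5) K_def by simp
    have sL: "s \<in> L" using sw ne unfolding s_def by auto
    have svL: "set v \<subseteq> L" "set t \<subseteq> L" using sw wsr by auto
    have r2: "reduced ((s # v) @ t)" using rw' wsr by simp
    have rsv: "reduced (s # v)" using iffD1[OF reduced_append r2] by blast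
    define p where "p = last (s # v)"
    have rpt: "reduced (p # t)" unfolding p_def using reduced_last_Cons[OF _ r2] by simp
    have lastw: "last w = last (p # t)" unfolding p_def wsr by (cases t) auto
    have "s \<noteq> inv_letter (last (p # t))" using cy lastw unfolding s_def by (metis inv_inv)
    then have "reduced (p # t) \<and> reduced [s] \<and> ((p#t) \<noteq> [] \<and> [s] \<noteq> [] \<longrightarrow> hd [s] \<noteq> inv_letter (last (p#t)))"
      using rpt by (simp add: reduced_Cons)
    then have rpts: "reduced ((p # t) @ [s])" by (rule iffD2[OF reduced_append])
    have vG: "v \<in> G S W g k s"
    proof -
      have "take g (drop (i*(g+1)+1) v) \<notin> W" for i
      proof
        assume "take g (drop (i*(g+1)+1) v) \<in> W"
        then have "\<not> sublist (take g (drop (i*(g+1)+1) v)) w" by (rule av)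
        then show False using sublist_block[of g "i*(g+1)+1" v s t] wsr by simp
      qed
      then show ?thesis using lv svL rsv unfolding G_def K_def L_def by auto
    qed
    have tE: "t \<in> butlast ` E S n p s"
    proof (rule image_eqI[where x="t @ [s]"])
      show "t = butlast (t @ [s])" by simp
      show "t @ [s] \<in> E S n p s" using lt assms(5) svL sL rpts unfolding E_def L_def by auto
    qed
    show "w \<in> f ` T" unfolding T_def f_def
      using sL vG tE wsr p_def by (intro image_eqI[where x="(s, v, t)"]) auto
  qed
  have finT: "finite T" unfolding T_def using finL assms(1)
    by (intro finite_SigmaI finite_G finite_imageI finite_E) auto
  have "card A \<le> card (f ` T)" using sub finite_imageI[OF finT] by (rule card_mono[rotated])
  also have "\<dots> \<le> card T" by (rule card_image_le[OF finT])
  also have "card T = (\<Sum>s\<in>L. card (SIGMA v:G S W g k s. butlast ` E S n (last (s # v)) s))"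
    unfolding T_def
    by (rule card_SigmaI[OF finL]) (auto intro!: finite_SigmaI simp: finite_butE finite_G assms(1))
  also have "\<dots> = (\<Sum>s\<in>L. \<Sum>v\<in>G S W g k s. card (butlast ` E S n (last (s # v)) s))"
    by (intro sum.cong refl card_SigmaI) (auto simp: finite_butE finite_G assms(1))
  also have "\<dots> \<le> (\<Sum>s\<in>L. \<Sum>v\<in>G S W g k s. card (E S n (last (s # v)) s))"
    by (intro sum_mono card_image_le finite_E assms(1))
  finally have c0: "card A \<le> (\<Sum>s\<in>L. \<Sum>v\<in>G S W g k s. card (E S n (last (s # v)) s))" .
  have c1: "real (card A) \<le> (\<Sum>s\<in>L. \<Sum>v\<in>G S W g k s. real (card (E S n (last (s # v)) s)))"
    using c0 unfolding of_nat_sum[symmetric] of_nat_le_iff .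
  define Q where "Q = (2 * real m - 1) ^ n + (2 * real m - 1)"
  have "S \<noteq> {}" using assms(2,3) by auto
  then obtain x where "x \<in> S" by blast
  then have "real (card (G S W g 1 (x, True))) \<le> R" by (intro assms(6)) auto
  then have R0: "R \<ge> 0" by (smt (verit) of_nat_0_le_iff)
  have "(\<Sum>s\<in>L. \<Sum>v\<in>G S W g k s. real (card (E S n (last (s # v)) s))) \<le> (\<Sum>s\<in>L. R ^ k * Q / (2 * real m))"
  proof (rule sum_mono)
    fix s assume sL: "s \<in> L"
    have "(\<Sum>v\<in>G S W g k s. real (card (E S n (last (s # v)) s))) \<le> (\<Sum>v\<in>G S W g k s. Q / (2 * real m))"
    proof (rule sum_mono)
      fix v assume "v \<in> G S W g k s"
      then have pL: "last (s # v) \<in> L" using sL by (intro last_mem) (auto simp: G_def L_def)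
      have "int (2*m) * int (card (E S n (last (s # v)) s)) \<le> (int (2*m) - 1)^n + (int (2*m) - 1)"
        using E_upper[OF assms(1,2,3) pL[unfolded L_def] sL[unfolded L_def]] .
      then have "real_of_int (int (2*m) * int (card (E S n (last (s # v)) s))) \<le> real_of_int ((int (2*m) - 1)^n + (int (2*m) - 1))"
        by (rule of_int_le_iff[THEN iffD2])
      then have "2 * real m * real (card (E S n (last (s # v)) s)) \<le> Q" unfolding Q_def by simp
      then show "real (card (E S n (last (s # v)) s)) \<le> Q / (2 * real m)"
        using assms(3) by (simp add: pos_le_divide_eq mult.commute)
    qed
    also have "\<dots> = real (card (G S W g k s)) * (Q / (2 * real m))" by simp
    also have "\<dots> \<le> R ^ k * (Q / (2 * real m))"
    proof (rule mult_right_mono)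
      show "real (card (G S W g k s)) \<le> R ^ k" using G_bound[OF assms(1) assms(6) sL[unfolded L_def]] .
      show "0 \<le> Q / (2 * real m)" unfolding Q_def using assms(3)
        by (intro divide_nonneg_pos add_nonneg_nonneg zero_le_power) auto
    qed
    finally show "(\<Sum>v\<in>G S W g k s. real (card (E S n (last (s # v)) s))) \<le> R ^ k * Q / (2 * real m)" by simp
  qed
  also have "\<dots> = R ^ k * Q" using assms(2,3) by (simp add: L_def card_L)
  finally show ?thesis using c1 unfolding A_def Q_def by linarith
qed

lemma exp_bound_R:
  fixes q R a :: real
  assumes q: "q \<ge> 3" and l: "l = n + k*(g+1)" and R0: "R \<ge> 0"
    and Rd: "R = q^(g+1) - a * (q - 1)"
  shows "R^k * (q^n + q) / q^l \<le> exp (q / q^n - k * a * (q - 1) / q^(g+1))"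
proof -
  define b where "b = a * (q - 1) / q^(g+1)"
  have qp: "q^(g+1) > 0" "q^n > 0" using q by auto
  have Rb: "R / q^(g+1) = 1 - b" unfolding b_def Rd using qp(1) q by (simp add: diff_divide_distrib)
  have ql: "q^l = (q^(g+1))^k * q^n" unfolding l by (simp add: power_add power_mult mult.commute power_mult_distrib)
  have "R^k * (q^n + q) / q^l = (R / q^(g+1))^k * (1 + q / q^n)"
  proof -
    have gen: "R^k * (Y + q) / (X^k * Y) = (R / X)^k * (1 + q / Y)" if "X > 0" "Y > 0" for X Y :: real
      using that by (simp add: power_divide field_simps)
    show ?thesis unfolding ql by (rule gen[OF qp])
  qed
  also have "\<dots> = (1 - b)^k * (1 + q / q^n)" unfolding Rb ..
  also have "\<dots> \<le> exp (- b)^k * exp (q / q^n)"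
  proof (rule mult_mono)
    have b1: "1 - b \<ge> 0" using Rb R0 qp by (metis divide_nonneg_pos)
    have "1 - b \<le> exp (- b)" using exp_ge_add_one_self[of "- b"] by simp
    then show "(1 - b)^k \<le> exp (- b)^k" using b1 by (rule power_mono)
    show "1 + q / q^n \<le> exp (q / q^n)" using exp_ge_add_one_self[of "q / q^n"] by simp
    show "0 \<le> exp (- b)^k" by simp
    show "0 \<le> 1 + q / q^n" using q qp by simp
  qed
  also have "\<dots> = exp (q / q^n - k * b)" by (simp add: exp_of_nat_mult[symmetric] exp_diff exp_minus field_simps)
  finally show ?thesis unfolding b_def by (simp add: mult.assoc)
qed


lemma key_nat:
  fixes l g k :: nat
  assumes "g \<ge> 1" "4*g < l" "k = l div (2*(g+1))"
  shows "l \<le> 6*g*k \<or> (g = 1 \<and> l = 7 \<and> k = 1)"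
proof -
  define d where "d = 2*(g+1)"
  have dpos: "d > 0" unfolding d_def by simp
  have lk: "l < d*k + d" using div_mult_mod_eq[of l d] mod_less_divisor[OF dpos, of l] assms(3)
    unfolding d_def by (metis add_less_cancel_left mult.commute)
  have k1: "k \<ge> 1"
  proof -
    have "d \<le> l" unfolding d_def using assms(1,2) by arith
    then have "1 \<le> l div d" using div_le_mono[of d l d] dpos by simp
    then show ?thesis using assms(3) unfolding d_def by simp
  qed
  show ?thesis
  proof (cases "g = 1")
    case True
    then have "l < 4*k + 4" using lk unfolding d_def by simp
    then have "l \<le> 6*k \<or> (l = 7 \<and> k = 1)" using k1 by arith
    then show ?thesis using True by simp
  next
    case False
    then have g2: "g \<ge> 2" using assms(1) by simp
    have a1: "2*g+2 \<le> 4*g-2" using g2 by arith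
    have a2: "(4*g-2)*1 \<le> (4*g-2)*k" using k1 by (rule mult_le_mono2)
    have a: "2*g+2 \<le> (4*g-2)*k" using a1 a2 by (metis le_trans mult_1_right)
    have b0: "(2*g+2)*k + (4*g-2)*k = (2*g+2 + (4*g-2))*k" by (rule add_mult_distrib[symmetric])
    have b1: "2*g+2 + (4*g-2) = 6*g" using g2 by arith
    have b: "(2*g+2)*k + (4*g-2)*k = 6*g*k" using b0 unfolding b1 .
    have "l < d*k + d" by (rule lk)
    also have "\<dots> = (2*g+2)*k + (2*g+2)" unfolding d_def by simp
    also have "\<dots> \<le> 6*g*k" using a b by linarith
    finally show ?thesis by simp
  qed
qed


lemma choose_k:
  fixes m l g j :: nat
  assumes m2: "m \<ge> 2" and g1: "g \<ge> 1" and j1: "j \<ge> 1" and gl: "4*g < l"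
  shows "\<exists>k n. l = n + k*(g+1) \<and> n \<ge> 1 \<and>
     (2*real m - 1) / (2*real m - 1)^n - real k * real j * ((2*real m - 1) - 1) / (2*real m - 1)^(g+1)
       \<le> 2 / (2*real m - 1) powr (real l / 2 - 1) - real l * real j / (9 * real g * (2*real m - 1)^g)"
proof -
  define q where "q = 2*real m - 1"
  have q3: "q \<ge> 3" unfolding q_def using m2 by simp
  have pw: "2 / q powr (real l / 2 - 1) > 0" using q3 by simp
  show ?thesis
  proof (cases "g = 1 \<and> l = 7 \<and> m = 2")
    case True
    have q: "q = 3" unfolding q_def using True by simp
    have pw': "2 / 3 powr (5/2::real) > 0" by simp
    have jr: "real j \<ge> 1" using j1 by simp
    have eq1: "2 / q powr (real l / 2 - 1) = 2 / 3 powr (5/2::real)" using True q by simp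
    have eq2: "q / q^3 - real 2 * real j * (q - 1) / q^(g+1) = 1/9 - 4 * real j / 9" using True q by simp
    have eq3: "real l * real j / (9 * real g * q^g) = 7 * real j / 27" using True q by simp
    have "q / q^3 - real 2 * real j * (q - 1) / q^(g+1) \<le> 2 / q powr (real l / 2 - 1) - real l * real j / (9 * real g * q^g)"
      unfolding eq1 eq2 eq3 using pw' jr by linarith
    then show ?thesis unfolding q_def using True by (intro exI[of _ 2] exI[of _ 3]) simp
  next
    case False
    define k where "k = l div (2*(g+1))"
    define n where "n = l - k*(g+1)"
    have kd: "k * (2*(g+1)) \<le> l" unfolding k_def by (rule div_times_less_eq_dividend)
    have ln: "l = n + k*(g+1)" unfolding n_def using kd by simp
    have n1: "n \<ge> 1" using kd g1 gl unfolding n_def by simp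
    have kd2: "2 * (k*(g+1)) \<le> l" using kd by (simp add: algebra_simps)
    have n2a: "l \<le> 2*n" using kd2 unfolding n_def by linarith
    have n2: "real l / 2 - 1 \<le> real (n - 1)" using n2a n1 by (simp add: of_nat_diff)
    have A: "q / q^n \<le> 2 / q powr (real l / 2 - 1)"
    proof -
      have "q powr (real l / 2 - 1) \<le> q powr real (n - 1)" using q3 n2 by (intro powr_mono) auto
      also have "\<dots> = q^(n-1)" using q3 by (simp add: powr_realpow)
      finally have h: "q powr (real l / 2 - 1) \<le> q^(n-1)" .
      have qn: "q^n = q * q^(n-1)" using n1 by (metis Suc_diff_1 less_le_trans zero_less_one power_Suc)
      have "q / q^n = 1 / q^(n-1)" unfolding qn using q3 by simp
      also have "\<dots> \<le> 2 / q^(n-1)" using q3 by (simp add: divide_right_mono)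
      also have "\<dots> \<le> 2 / q powr (real l / 2 - 1)" using h q3 by (intro divide_left_mono) auto
      finally show ?thesis .
    qed
    have kn: "l \<le> 6*g*k \<or> (g = 1 \<and> l = 7 \<and> k = 1)" using key_nat[OF g1 gl k_def] .
    have K: "real l * q \<le> 9 * real g * real k * (q - 1)"
    proof (cases "l \<le> 6*g*k")
      case True
      then have "real l \<le> 6 * real g * real k" by (metis of_nat_le_iff of_nat_mult of_nat_numeral)
      then have "real l * q \<le> (6 * real g * real k) * q" using q3 by (intro mult_right_mono) auto
      also have "\<dots> = (real g * real k) * (6 * q)" by simp
      also have "\<dots> \<le> (real g * real k) * (9 * (q - 1))" using q3 by (intro mult_left_mono) auto
      also have "\<dots> = 9 * real g * real k * (q - 1)" by (simp only: mult_ac)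
      finally show ?thesis .
    next
      case c2: False
      then have e: "g = 1" "l = 7" "k = 1" using kn by auto
      then have "m \<ge> 3" using False m2 by auto
      then have "q \<ge> 5" unfolding q_def by simp
      then show ?thesis using e by simp
    qed
    have B: "real l * real j / (9 * real g * q^g) \<le> real k * real j * (q - 1) / q^(g+1)"
    proof -
      have gq: "9 * real g * q^(g+1) > 0" using g1 q3 by simp
      have e1: "real l * real j / (9 * real g * q^g) = (real l * q) * real j / (9 * real g * q^(g+1))"
        using q3 g1 by (simp add: field_simps)
      have e2: "real k * real j * (q - 1) / q^(g+1) = (9 * real g * real k * (q - 1)) * real j / (9 * real g * q^(g+1))"
        using q3 g1 by (simp add: field_simps)
      show ?thesis unfolding e1 e2 using K gq by (intro divide_right_mono mult_right_mono) auto
    qed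
    have "q / q^n - real k * real j * (q - 1) / q^(g+1) \<le> 2 / q powr (real l / 2 - 1) - real l * real j / (9 * real g * q^g)"
      using A B by linarith
    then show ?thesis unfolding q_def using ln n1 by blast
  qed
qed


theorem lemma7p3:
  fixes S :: "'a set" and m l g j :: nat and W :: "'a letter list set"
  assumes "finite S" and "card S = m" and "m \<ge> 2"
    and "l \<ge> 4"
    and "real g < real l / 4"
    and "W \<subseteq> reduced_words S g" and "card W = j"
  shows "real (card {w \<in> cyc_reduced_words S l. \<forall>u\<in>W. \<not> sublist u w})
           / real (card (cyc_reduced_words S l))
         \<le> exp (2 / (2 * real m - 1) powr (real l / 2 - 1)
                 - real l * real j / (9 * real g * (2 * real m - 1) ^ g))"
proof -
  define A where "A = {w \<in> cyc_reduced_words S l. \<forall>u\<in>W. \<not> sublist u w}"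
  define C where "C = cyc_reduced_words S l"
  define q where "q = 2 * real m - 1"
  have q3: "q \<ge> 3" unfolding q_def using assms(3) by simp
  have finC: "finite C"
    unfolding C_def cyc_reduced_words_def word_over_iff
    by (rule finite_subset[OF _ finite_lists_length_eq[of "S \<times> (UNIV::bool set)" l]]) (use assms(1) in auto)
  have AC: "card A \<le> card C" unfolding A_def C_def using finC[unfolded C_def] by (intro card_mono) auto
  have m1: "m \<ge> 1" using assms(3) by simp
  have l1: "l \<ge> 1" using assms(4) by simp
  have cC: "real (card C) \<ge> q^l" unfolding C_def q_def by (rule card_C_lower[OF assms(1,2) m1 l1])
  have Cpos: "real (card C) > 0" using cC q3 by (smt (verit) zero_less_power)
  show ?thesis
  proof (cases "j = 0 \<or> g = 0")
    case True
    have r1: "real (card A) / real (card C) \<le> 1" using AC Cpos by simp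
    have t2: "real l * real j / (9 * real g * (2 * real m - 1) ^ g) = 0" using True by auto
    have t1: "2 / (2 * real m - 1) powr (real l / 2 - 1) \<ge> 0" by simp
    have "1 \<le> exp (2 / (2 * real m - 1) powr (real l / 2 - 1) - real l * real j / (9 * real g * (2 * real m - 1) ^ g))"
      unfolding t2 using t1 by simp
    then show ?thesis using r1 unfolding A_def C_def by linarith
  next
    case False
    then have j1: "j \<ge> 1" and g1: "g \<ge> 1" by auto
    have finW: "finite W" using j1 assms(7) card_ge_0_finite by force
    have gl: "4*g < l" using assms(5) by linarith
    obtain k n where ln: "l = n + k*(g+1)" and n1: "n \<ge> 1" and ineq:
      "(2*real m - 1) / (2*real m - 1)^n - real k * real j * ((2*real m - 1) - 1) / (2*real m - 1)^(g+1)
       \<le> 2 / (2*real m - 1) powr (real l / 2 - 1) - real l * real j / (9 * real g * (2*real m - 1)^g)"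
      using choose_k[OF assms(3) g1 j1 gl] by blast
    define R where "R = real ((2*m - 1)^(g+1)) - real (card W) * (2 * real m - 2)"
    have GR: "real (card (G S W g 1 p)) \<le> R" if "p \<in> S \<times> UNIV" for p
      unfolding R_def by (rule G1_bound[OF assms(1,2) m1 g1 assms(6) finW that])
    have cA: "real (card A) \<le> R ^ k * ((2 * real m - 1) ^ n + (2 * real m - 1))"
      unfolding A_def by (rule card_A_upper[OF assms(1,2) m1 ln n1 GR])
    have "S \<noteq> {}" using assms(2,3) by auto
    then obtain x where "x \<in> S" by blast
    then have "real (card (G S W g 1 (x, True))) \<le> R" by (intro GR) auto
    then have R0: "R \<ge> 0" by (smt (verit) of_nat_0_le_iff)
    have Rq: "R = q^(g+1) - real j * (q - 1)"
      unfolding R_def q_def using m1 assms(7) by (simp add: of_nat_diff)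
    have "real (card A) / real (card C) \<le> R ^ k * (q ^ n + q) / q^l"
    proof (rule frac_le)
      show "0 \<le> R ^ k * (q ^ n + q)" using R0 q3 by simp
      show "real (card A) \<le> R ^ k * (q ^ n + q)" using cA unfolding q_def .
      show "0 < q^l" using q3 by simp
      show "q^l \<le> real (card C)" by (rule cC)
    qed
    also have "\<dots> \<le> exp (q / q^n - real k * real j * (q - 1) / q^(g+1))"
      by (rule exp_bound_R[OF q3 ln R0 Rq])
    also have "\<dots> \<le> exp (2 / q powr (real l / 2 - 1) - real l * real j / (9 * real g * q^g))"
      using ineq unfolding q_def by simp
    finally show ?thesis unfolding A_def C_def q_def .
  qed
qed

end
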